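(* Fix $J\ge 2$ and sample sizes $n_1,\ldots,n_J$ with $\min_j n_j\ge 2$. For each dimension $d$, let $F_1,\ldots,F_J$ be distributions on $\mathbb{R}^d$ with finite second moments, means $\boldsymbol{\mu}_j$ and covariance matrices $\boldsymbol{\Sigma}_j$, satisfying assumptions (A1) and (A2) stated in the context. Let $\mathbf{X}_{j1},\ldots,\mathbf{X}_{jn_j}\overset{iid}{\sim}F_j$, $j=1,\ldots,J$, be independent collections, let $\overline{\mathbf{X}}_j=n_j^{-1}\sum_{i=1}^{n_j}\mathbf{X}_{ji}$, and define the empirical (squared) Mahalanobis distances computed with the identity matrix, $\widehat\delta_j(\mathbf{x})=\|\mathbf{x}-\overline{\mathbf{X}}_j\|^2$, and $\widehat\Delta(\mathbf{x})=(\widehat\delta_1(\mathbf{x}),\ldots,\widehat\delta_J(\mathbf{x}))$. Then, as $d\to\infty$: (a) for every $j$ and $i=1,\ldots,n_j$, $d^{-1}\widehat\Delta(\mathbf{X}_{ji})\overset{P}{\to}\Theta_j=(\theta_{j1},\ldots,\theta_{jJ})$, where $\theta_{jj}=(1-1/n_j)\sigma_j^2$ and $\theta_{jk}=\nu_{jk}^2+\sigma_j^2+\sigma_k^2/n_k$ for $k\ne j$; (b) for an observation $\mathbf{Z}\sim F_i$ independent of the samples, $d^{-1}\widehat\Delta(\mathbf{Z})\overset{P}{\to}\Theta_i^{*}=(\theta^*_{i1},\ldots,\theta^*_{iJ})$, where $\theta^*_{ii}=(1+1/n_i)\sigma_i^2$ and $\theta^*_{ik}=\nu_{ik}^2+\sigma_i^2+\sigma_k^2/n_k$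 for $k\ne i$.
   Context: Assumption (A1): for all $1\le j,j'\le J$ and independent random vectors $\mathbf{X}\sim F_j$ and $\mathbf{Y},\mathbf{Z}\sim F_{j'}$ (with coordinates $X_i,Y_i,Z_i$), as $d\to\infty$, $\big|d^{-1}\sum_{i=1}^d(X_i-Y_i)(X_i-Z_i)-E\{d^{-1}\sum_{i=1}^d(X_i-Y_i)(X_i-Z_i)\}\big|\overset{P}{\to}0$ and $\big|d^{-1}\sum_{i=1}^d(X_i-Y_i)^2-E\{d^{-1}\sum_{i=1}^d(X_i-Y_i)^2\}\big|\overset{P}{\to}0$. Assumption (A2): for each $j$ there is a constant $\sigma_j^2$ with $d^{-1}\mathrm{trace}(\boldsymbol{\Sigma}_j)\to\sigma_j^2$, and for each $j\ne j'$ there is a constant $\nu_{jj'}^2$ with $d^{-1}\|\boldsymbol{\mu}_j-\boldsymbol{\mu}_{j'}\|^2\to\nu_{jj'}^2$, as $d\to\infty$. The sample sizes $n_j$ stay fixed as $d\to\infty$. *)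

theory Defs
  imports "HOL-Probability.Probability"
begin

text \<open>Vectors in R^d are represented as functions nat => real, coordinates 0..d-1,
  with the product sigma-algebra on the extensional functions over {..<d}.\<close>

definition vec_space :: "nat \<Rightarrow> (nat \<Rightarrow> real) measure" where
  "vec_space d = PiM {..<d} (\<lambda>_. borel)"

definition sqdist :: "nat \<Rightarrow> (nat \<Rightarrow> real) \<Rightarrow> (nat \<Rightarrow> real) \<Rightarrow> real" where
  "sqdist d x y = (\<Sum>k<d. (x k - y k)^2)"

definition mean_vec :: "(nat \<Rightarrow> real) measure \<Rightarrow> nat \<Rightarrow> real" where
  "mean_vec F k = (\<integral>x. x k \<partial>F)"

definition trace_cov :: "nat \<Rightarrow> (nat \<Rightarrow> real) measure \<Rightarrow> real" where
  "trace_cov d F = (\<Sum>k<d. \<integral>x. (x k - mean_vec F k)^2 \<partial>F)"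

definition conv_in_prob :: "(nat \<Rightarrow> 'a measure) \<Rightarrow> (nat \<Rightarrow> 'a \<Rightarrow> real) \<Rightarrow> (nat \<Rightarrow> real) \<Rightarrow> bool" where
  "conv_in_prob M Y c \<longleftrightarrow>
     (\<forall>e>0. (\<lambda>d. measure (M d) {\<omega> \<in> space (M d). \<bar>Y d \<omega> - c d\<bar> > e}) \<longlonglongrightarrow> 0)"

definition vec_conv_in_prob ::
  "(nat \<Rightarrow> 'a measure) \<Rightarrow> nat \<Rightarrow> (nat \<Rightarrow> 'a \<Rightarrow> nat \<Rightarrow> real) \<Rightarrow> (nat \<Rightarrow> real) \<Rightarrow> bool" where
  "vec_conv_in_prob M J Y \<theta> \<longleftrightarrow>
     (\<forall>e>0. (\<lambda>d. measure (M d) {\<omega> \<in> space (M d). sqrt (\<Sum>k<J. (Y d \<omega> k - \<theta> k)^2) > e})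
        \<longlonglongrightarrow> 0)"

text \<open>Assumption (A1), stated on the laws F d j (d = dimension, j = class index < J),
  using independent X ~ F_j, Y, Z ~ F_j' realised on the product measure.\<close>
definition assumption_A1 :: "nat \<Rightarrow> (nat \<Rightarrow> nat \<Rightarrow> (nat \<Rightarrow> real) measure) \<Rightarrow> bool" where
  "assumption_A1 J F \<longleftrightarrow> (\<forall>j<J. \<forall>j'<J.
     conv_in_prob (\<lambda>d. F d j \<Otimes>\<^sub>M (F d j' \<Otimes>\<^sub>M F d j'))
       (\<lambda>d (x, y, z). (\<Sum>i<d. (x i - y i) * (x i - z i)) / real d)
       (\<lambda>d. \<integral>(x, y, z). (\<Sum>i<d. (x i - y i) * (x i - z i)) / real d
              \<partial>(F d j \<Otimes>\<^sub>M (F d j' \<Otimes>\<^sub>M F d j'))) \<and>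
     conv_in_prob (\<lambda>d. F d j \<Otimes>\<^sub>M F d j')
       (\<lambda>d (x, y). (\<Sum>i<d. (x i - y i)^2) / real d)
       (\<lambda>d. \<integral>(x, y). (\<Sum>i<d. (x i - y i)^2) / real d \<partial>(F d j \<Otimes>\<^sub>M F d j')))"

definition assumption_A2 ::
  "nat \<Rightarrow> (nat \<Rightarrow> nat \<Rightarrow> (nat \<Rightarrow> real) measure) \<Rightarrow> (nat \<Rightarrow> real) \<Rightarrow> (nat \<Rightarrow> nat \<Rightarrow> real) \<Rightarrow> bool" where
  "assumption_A2 J F \<sigma>2 \<nu>2 \<longleftrightarrow>
     (\<forall>j<J. (\<lambda>d. trace_cov d (F d j) / real d) \<longlonglongrightarrow> \<sigma>2 j) \<and>
     (\<forall>j<J. \<forall>k<J. j \<noteq> k \<longrightarrow>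
        (\<lambda>d. (\<Sum>i<d. (mean_vec (F d j) i - mean_vec (F d k) i)^2) / real d) \<longlonglongrightarrow> \<nu>2 j k)"

definition sample_mean :: "nat \<Rightarrow> (nat \<Rightarrow> 'a \<Rightarrow> nat \<Rightarrow> real) \<Rightarrow> 'a \<Rightarrow> nat \<Rightarrow> real" where
  "sample_mean nj Xj \<omega> = (\<lambda>k. (\<Sum>i<nj. Xj i \<omega> k) / real nj)"

definition Delta_hat ::
  "nat \<Rightarrow> (nat \<Rightarrow> nat) \<Rightarrow> (nat \<Rightarrow> nat \<Rightarrow> 'a \<Rightarrow> nat \<Rightarrow> real) \<Rightarrow> 'a \<Rightarrow> (nat \<Rightarrow> real) \<Rightarrow> nat \<Rightarrow> real" where
  "Delta_hat d n Xd \<omega> x = (\<lambda>k. sqdist d x (sample_mean (n k) (Xd k) \<omega>))"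

definition Theta :: "(nat \<Rightarrow> nat) \<Rightarrow> (nat \<Rightarrow> real) \<Rightarrow> (nat \<Rightarrow> nat \<Rightarrow> real) \<Rightarrow> nat \<Rightarrow> nat \<Rightarrow> real" where
  "Theta n \<sigma>2 \<nu>2 j k = (if k = j then (1 - 1 / real (n j)) * \<sigma>2 j
                         else \<nu>2 j k + \<sigma>2 j + \<sigma>2 k / real (n k))"

definition Theta_star :: "(nat \<Rightarrow> nat) \<Rightarrow> (nat \<Rightarrow> real) \<Rightarrow> (nat \<Rightarrow> nat \<Rightarrow> real) \<Rightarrow> nat \<Rightarrow> nat \<Rightarrow> real" where
  "Theta_star n \<sigma>2 \<nu>2 i k = (if k = i then (1 + 1 / real (n i)) * \<sigma>2 i
                              else \<nu>2 i k + \<sigma>2 i + \<sigma>2 k / real (n k))"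

end

theory Submission
  imports Defs
begin

definition cipm :: "(nat \<Rightarrow> 'a measure) \<Rightarrow> (nat \<Rightarrow> 'a \<Rightarrow> real) \<Rightarrow> real \<Rightarrow> bool" where
  "cipm M Y c \<longleftrightarrow> (\<forall>d. Y d \<in> borel_measurable (M d)) \<and>
     (\<forall>e>0. (\<lambda>d. measure (M d) {\<omega> \<in> space (M d). \<bar>Y d \<omega> - c\<bar> > e}) \<longlonglongrightarrow> 0)"

lemma cipm_M: "cipm M Y c \<Longrightarrow> Y d \<in> borel_measurable (M d)"
  unfolding cipm_def by auto

lemma cipm_D: "cipm M Y c \<Longrightarrow> e > 0 \<Longrightarrow>
   (\<lambda>d. measure (M d) {\<omega> \<in> space (M d). \<bar>Y d \<omega> - c\<bar> > e}) \<longlonglongrightarrow> 0"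
  unfolding cipm_def by auto

lemma cipm_const: "cipm M (\<lambda>d \<omega>. c) c"
  unfolding cipm_def by simp

lemma tri_half: "e < \<bar>a + b - (c1 + c2)\<bar> \<Longrightarrow> e/2 < \<bar>a - c1\<bar> \<or> e/2 < \<bar>b - c2\<bar>"
  for a b c1 c2 e :: real by arith

lemma tri_half2: "\<bar>cd - c\<bar> < e/2 \<Longrightarrow> e < \<bar>y - c\<bar> \<Longrightarrow> e/2 < \<bar>y - cd\<bar>"
  for y c cd e :: real by arith

lemma cipm_add:
  assumes P: "\<forall>d. prob_space (M d)" and 1: "cipm M Y1 c1" and 2: "cipm M Y2 c2"
  shows "cipm M (\<lambda>d \<omega>. Y1 d \<omega> + Y2 d \<omega>) (c1 + c2)"
  unfolding cipm_def
proof (intro conjI allI impI)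
  fix d show "(\<lambda>\<omega>. Y1 d \<omega> + Y2 d \<omega>) \<in> borel_measurable (M d)"
    using cipm_M[OF 1] cipm_M[OF 2] by (rule borel_measurable_add)
next
  fix e :: real assume e: "e > 0"
  have t1: "(\<lambda>d. measure (M d) {\<omega> \<in> space (M d). \<bar>Y1 d \<omega> - c1\<bar> > e/2}) \<longlonglongrightarrow> 0"
    using cipm_D[OF 1 half_gt_zero[OF e]] .
  have t2: "(\<lambda>d. measure (M d) {\<omega> \<in> space (M d). \<bar>Y2 d \<omega> - c2\<bar> > e/2}) \<longlonglongrightarrow> 0"
    using cipm_D[OF 2 half_gt_zero[OF e]] .
  have le: "measure (M d) {\<omega> \<in> space (M d). \<bar>Y1 d \<omega> + Y2 d \<omega> - (c1 + c2)\<bar> > e}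
     \<le> measure (M d) {\<omega> \<in> space (M d). \<bar>Y1 d \<omega> - c1\<bar> > e/2}
       + measure (M d) {\<omega> \<in> space (M d). \<bar>Y2 d \<omega> - c2\<bar> > e/2}" for d
  proof -
    interpret prob_space "M d" using P by auto
    have m1: "Y1 d \<in> borel_measurable (M d)" and m2: "Y2 d \<in> borel_measurable (M d)"
      using cipm_M[OF 1] cipm_M[OF 2] by auto
    have s1: "{\<omega> \<in> space (M d). \<bar>Y1 d \<omega> - c1\<bar> > e/2} \<in> sets (M d)" using m1 by measurable
    have s2: "{\<omega> \<in> space (M d). \<bar>Y2 d \<omega> - c2\<bar> > e/2} \<in> sets (M d)" using m2 by measurable
    have sub: "{\<omega> \<in> space (M d). \<bar>Y1 d \<omega> + Y2 d \<omega> - (c1 + c2)\<bar> > e} \<subseteq>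
        {\<omega> \<in> space (M d). \<bar>Y1 d \<omega> - c1\<bar> > e/2} \<union> {\<omega> \<in> space (M d). \<bar>Y2 d \<omega> - c2\<bar> > e/2}"
      using tri_half by blast
    have "measure (M d) {\<omega> \<in> space (M d). \<bar>Y1 d \<omega> + Y2 d \<omega> - (c1 + c2)\<bar> > e}
       \<le> measure (M d) ({\<omega> \<in> space (M d). \<bar>Y1 d \<omega> - c1\<bar> > e/2} \<union> {\<omega> \<in> space (M d). \<bar>Y2 d \<omega> - c2\<bar> > e/2})"
      by (rule finite_measure_mono[OF sub]) (use s1 s2 in auto)
    also have "\<dots> \<le> measure (M d) {\<omega> \<in> space (M d). \<bar>Y1 d \<omega> - c1\<bar> > e/2}
       + measure (M d) {\<omega> \<in> space (M d). \<bar>Y2 d \<omega> - c2\<bar> > e/2}"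
      by (rule measure_Un_le[OF s1 s2])
    finally show ?thesis .
  qed
  show "(\<lambda>d. measure (M d) {\<omega> \<in> space (M d). \<bar>Y1 d \<omega> + Y2 d \<omega> - (c1 + c2)\<bar> > e}) \<longlonglongrightarrow> 0"
    by (rule tendsto_sandwich[OF _ _ tendsto_const tendsto_add_zero[OF t1 t2]])
       (rule always_eventually, rule allI, rule measure_nonneg,
        rule always_eventually, rule allI, rule le)
qed

lemma cipm_sum:
  assumes P: "\<forall>d. prob_space (M d)" and fin: "finite S"
    and h: "\<forall>a\<in>S. cipm M (Y a) (c a)"
  shows "cipm M (\<lambda>d \<omega>. \<Sum>a\<in>S. Y a d \<omega>) (\<Sum>a\<in>S. c a)"
  using fin h
proof (induction S rule: finite_induct)
  case empty then show ?case using cipm_const[of M 0] by simp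
next
  case (insert x F)
  then have "cipm M (\<lambda>d \<omega>. Y x d \<omega> + (\<Sum>a\<in>F. Y a d \<omega>)) (c x + (\<Sum>a\<in>F. c a))"
    by (intro cipm_add[OF P]) auto
  then show ?case using insert by simp
qed

lemma cipm_scale:
  assumes P: "\<forall>d. prob_space (M d)" and 1: "cipm M Y c"
  shows "cipm M (\<lambda>d \<omega>. r * Y d \<omega>) (r * c)"
proof (cases "r = 0")
  case True then show ?thesis using cipm_const[of M 0] by simp
next
  case False
  show ?thesis unfolding cipm_def
  proof (intro conjI allI impI)
    fix d show "(\<lambda>\<omega>. r * Y d \<omega>) \<in> borel_measurable (M d)"
      using cipm_M[OF 1] by (rule borel_measurable_times[OF borel_measurable_const])
  next
    fix e :: real assume e: "e > 0"
    have "e / \<bar>r\<bar> > 0" using e False by auto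
    then have t: "(\<lambda>d. measure (M d) {\<omega> \<in> space (M d). \<bar>Y d \<omega> - c\<bar> > e / \<bar>r\<bar>}) \<longlonglongrightarrow> 0"
      by (rule cipm_D[OF 1])
    have eq: "{\<omega> \<in> space (M d). \<bar>r * Y d \<omega> - r * c\<bar> > e} = {\<omega> \<in> space (M d). \<bar>Y d \<omega> - c\<bar> > e / \<bar>r\<bar>}" for d
    proof -
      have "\<bar>r * Y d \<omega> - r * c\<bar> = \<bar>r\<bar> * \<bar>Y d \<omega> - c\<bar>" for \<omega>
        by (metis abs_mult right_diff_distrib)
      then show ?thesis using False by (auto simp: divide_less_eq mult.commute)
    qed
    show "(\<lambda>d. measure (M d) {\<omega> \<in> space (M d). \<bar>r * Y d \<omega> - r * c\<bar> > e}) \<longlonglongrightarrow> 0"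
      unfolding eq by (rule t)
  qed
qed

lemma cipm_det:
  assumes P: "\<forall>d. prob_space (M d)" and m: "\<forall>d. Y d \<in> borel_measurable (M d)"
    and t: "\<forall>e>0. (\<lambda>d. measure (M d) {\<omega> \<in> space (M d). \<bar>Y d \<omega> - cd d\<bar> > e}) \<longlonglongrightarrow> 0"
    and c: "cd \<longlonglongrightarrow> c"
  shows "cipm M Y c"
  unfolding cipm_def
proof (intro conjI allI impI)
  fix d show "Y d \<in> borel_measurable (M d)" using m by auto
next
  fix e :: real assume e: "e > 0"
  have t2: "(\<lambda>d. measure (M d) {\<omega> \<in> space (M d). \<bar>Y d \<omega> - cd d\<bar> > e/2}) \<longlonglongrightarrow> 0"
    using t half_gt_zero[OF e] by blast
  have ev: "eventually (\<lambda>d. dist (cd d) c < e/2) sequentially"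
    using c[unfolded tendsto_iff, rule_format, OF half_gt_zero[OF e]] .
  have "eventually (\<lambda>d. measure (M d) {\<omega> \<in> space (M d). \<bar>Y d \<omega> - c\<bar> > e}
     \<le> measure (M d) {\<omega> \<in> space (M d). \<bar>Y d \<omega> - cd d\<bar> > e/2}) sequentially"
    using ev
  proof eventually_elim
    case (elim d)
    interpret prob_space "M d" using P by auto
    have md: "Y d \<in> borel_measurable (M d)" using m by auto
    have s: "{\<omega> \<in> space (M d). \<bar>Y d \<omega> - cd d\<bar> > e/2} \<in> sets (M d)" using md by measurable
    have sub: "{\<omega> \<in> space (M d). \<bar>Y d \<omega> - c\<bar> > e} \<subseteq> {\<omega> \<in> space (M d). \<bar>Y d \<omega> - cd d\<bar> > e/2}"
      using tri_half2[of "cd d" c e] elim by (auto simp: dist_real_def)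
    show ?case
      by (rule finite_measure_mono[OF sub s])
  qed
  then show "(\<lambda>d. measure (M d) {\<omega> \<in> space (M d). \<bar>Y d \<omega> - c\<bar> > e}) \<longlonglongrightarrow> 0"
    by (rule tendsto_sandwich[OF _ _ tendsto_const t2, rotated])
       (rule always_eventually, rule allI, rule measure_nonneg)
qed

lemma cipm_vec:
  assumes P: "\<forall>d. prob_space (M d)"
    and h: "\<forall>k<J. cipm M (\<lambda>d \<omega>. Y d \<omega> k) (\<theta> k)"
  shows "vec_conv_in_prob M J Y \<theta>"
proof -
  have habs: "\<forall>k\<in>{..<J}. cipm M (\<lambda>d \<omega>. \<bar>Y d \<omega> k - \<theta> k\<bar>) 0"
  proof
    fix k assume k: "k \<in> {..<J}"
    then have hk: "cipm M (\<lambda>d \<omega>. Y d \<omega> k) (\<theta> k)" using h by auto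
    show "cipm M (\<lambda>d \<omega>. \<bar>Y d \<omega> k - \<theta> k\<bar>) 0"
      unfolding cipm_def
    proof (intro conjI allI impI)
      fix d show "(\<lambda>\<omega>. \<bar>Y d \<omega> k - \<theta> k\<bar>) \<in> borel_measurable (M d)"
        using cipm_M[OF hk, of d] by measurable
    next
      fix e :: real assume "e > 0"
      then show "(\<lambda>d. measure (M d) {\<omega> \<in> space (M d). \<bar>\<bar>Y d \<omega> k - \<theta> k\<bar> - 0\<bar> > e}) \<longlonglongrightarrow> 0"
        using cipm_D[OF hk] by simp
    qed
  qed
  have S: "cipm M (\<lambda>d \<omega>. \<Sum>k<J. \<bar>Y d \<omega> k - \<theta> k\<bar>) 0"
    using cipm_sum[OF P _ habs] by simp
  show ?thesis unfolding vec_conv_in_prob_def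
  proof (intro allI impI)
    fix e :: real assume e: "e > 0"
    have t: "(\<lambda>d. measure (M d) {\<omega> \<in> space (M d). \<bar>(\<Sum>k<J. \<bar>Y d \<omega> k - \<theta> k\<bar>) - 0\<bar> > e}) \<longlonglongrightarrow> 0"
      using cipm_D[OF S e] .
    have le: "measure (M d) {\<omega> \<in> space (M d). sqrt (\<Sum>k<J. (Y d \<omega> k - \<theta> k)^2) > e}
      \<le> measure (M d) {\<omega> \<in> space (M d). \<bar>(\<Sum>k<J. \<bar>Y d \<omega> k - \<theta> k\<bar>) - 0\<bar> > e}" for d
    proof -
      interpret prob_space "M d" using P by auto
      have m: "(\<lambda>\<omega>. \<Sum>k<J. \<bar>Y d \<omega> k - \<theta> k\<bar>) \<in> borel_measurable (M d)" using cipm_M[OF S] .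
      have s: "{\<omega> \<in> space (M d). \<bar>(\<Sum>k<J. \<bar>Y d \<omega> k - \<theta> k\<bar>) - 0\<bar> > e} \<in> sets (M d)" using m by measurable
      have "sqrt (\<Sum>k<J. (Y d \<omega> k - \<theta> k)^2) \<le> (\<Sum>k<J. \<bar>Y d \<omega> k - \<theta> k\<bar>)" for \<omega>
        using L2_set_le_sum_abs[of "\<lambda>k. Y d \<omega> k - \<theta> k" "{..<J}"] by (simp add: L2_set_def)
      then have sub: "{\<omega> \<in> space (M d). sqrt (\<Sum>k<J. (Y d \<omega> k - \<theta> k)^2) > e} \<subseteq>
         {\<omega> \<in> space (M d). \<bar>(\<Sum>k<J. \<bar>Y d \<omega> k - \<theta> k\<bar>) - 0\<bar> > e}"
        by (auto intro: less_le_trans)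
      show ?thesis by (rule finite_measure_mono[OF sub s])
    qed
    show "(\<lambda>d. measure (M d) {\<omega> \<in> space (M d). sqrt (\<Sum>k<J. (Y d \<omega> k - \<theta> k)^2) > e}) \<longlonglongrightarrow> 0"
      by (rule tendsto_sandwich[OF _ _ tendsto_const t])
         (rule always_eventually, rule allI, rule measure_nonneg,
          rule always_eventually, rule allI, rule le)
  qed
qed


lemma coord_sq:
  fixes a b :: "'a \<Rightarrow> real"
  assumes P: "prob_space M" and ind: "prob_space.indep_var M borel a borel b"
    and ma: "a \<in> borel_measurable M" and mb: "b \<in> borel_measurable M"
    and ia: "integrable M (\<lambda>\<omega>. (a \<omega>)^2)" and ib: "integrable M (\<lambda>\<omega>. (b \<omega>)^2)"
  shows "integrable M (\<lambda>\<omega>. (a \<omega> - b \<omega>)^2)"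
    and "(\<integral>\<omega>. (a \<omega> - b \<omega>)^2 \<partial>M) = (\<integral>\<omega>. (a \<omega> - (\<integral>\<omega>. a \<omega> \<partial>M))^2 \<partial>M)
          + (\<integral>\<omega>. (b \<omega> - (\<integral>\<omega>. b \<omega> \<partial>M))^2 \<partial>M) + ((\<integral>\<omega>. a \<omega> \<partial>M) - (\<integral>\<omega>. b \<omega> \<partial>M))^2"
proof -
  interpret prob_space M by (rule P)
  have ia1: "integrable M a" by (rule square_integrable_imp_integrable[OF ma ia])
  have ib1: "integrable M b" by (rule square_integrable_imp_integrable[OF mb ib])
  have iab: "integrable M (\<lambda>\<omega>. a \<omega> * b \<omega>)" by (rule indep_var_integrable[OF ind ia1 ib1])
  have eab: "(\<integral>\<omega>. a \<omega> * b \<omega> \<partial>M) = (\<integral>\<omega>. a \<omega> \<partial>M) * (\<integral>\<omega>. b \<omega> \<partial>M)"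
    by (rule indep_var_lebesgue_integral[OF ind ia1 ib1])
  have e1: "(\<lambda>\<omega>. (a \<omega> - b \<omega>)^2) = (\<lambda>\<omega>. ((a \<omega>)^2 + (b \<omega>)^2) - 2 * (a \<omega> * b \<omega>))"
    by (simp add: fun_eq_iff power2_eq_square algebra_simps)
  show "integrable M (\<lambda>\<omega>. (a \<omega> - b \<omega>)^2)"
    unfolding e1 using ia ib iab by auto
  have "(\<integral>\<omega>. (a \<omega> - b \<omega>)^2 \<partial>M) = (\<integral>\<omega>. (a \<omega>)^2 \<partial>M) + (\<integral>\<omega>. (b \<omega>)^2 \<partial>M) - 2 * (\<integral>\<omega>. a \<omega> * b \<omega> \<partial>M)"
    unfolding e1 using ia ib iab by (simp add: integral_diff integral_add)
  moreover have "(\<integral>\<omega>. (f \<omega> - c)^2 \<partial>M) = (\<integral>\<omega>. (f \<omega>)^2 \<partial>M) - 2 * c * (\<integral>\<omega>. f \<omega> \<partial>M) + c^2"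
    if "integrable M (\<lambda>\<omega>. (f \<omega>)^2)" "integrable M f" for f :: "'a \<Rightarrow> real" and c
  proof -
    have "(\<lambda>\<omega>. (f \<omega> - c)^2) = (\<lambda>\<omega>. ((f \<omega>)^2 - 2 * c * f \<omega>) + c^2)"
      by (simp add: fun_eq_iff power2_eq_square algebra_simps)
    then show ?thesis using that by (simp add: integral_diff integral_add prob_space)
  qed
  ultimately show "(\<integral>\<omega>. (a \<omega> - b \<omega>)^2 \<partial>M) = (\<integral>\<omega>. (a \<omega> - (\<integral>\<omega>. a \<omega> \<partial>M))^2 \<partial>M)
          + (\<integral>\<omega>. (b \<omega> - (\<integral>\<omega>. b \<omega> \<partial>M))^2 \<partial>M) + ((\<integral>\<omega>. a \<omega> \<partial>M) - (\<integral>\<omega>. b \<omega> \<partial>M))^2"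
    using ia ib ia1 ib1 eab by (simp add: power2_eq_square algebra_simps prob_space)
qed

lemma comp_meas: "i < d \<Longrightarrow> (\<lambda>x. x i) \<in> borel_measurable (vec_space d)"
  unfolding vec_space_def by (rule measurable_component_singleton) simp

lemma G_meas: "(\<lambda>z. (\<Sum>i<d. (fst z i - snd z i)^2) / real d) \<in> borel_measurable (vec_space d \<Otimes>\<^sub>M vec_space d)"
  by (intro borel_measurable_divide borel_measurable_sum borel_measurable_power borel_measurable_diff
      borel_measurable_const measurable_compose[OF measurable_fst comp_meas]
      measurable_compose[OF measurable_snd comp_meas]) auto

lemma pair_fixed:
  assumes P: "prob_space M"
    and Am: "A \<in> measurable M (vec_space d)" and Ad: "distr M (vec_space d) A = Fp"
    and Bm: "B \<in> measurable M (vec_space d)" and Bd: "distr M (vec_space d) B = Fq"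
    and ind: "prob_space.indep_var M (vec_space d) A (vec_space d) B"
    and momp: "\<forall>k<d. integrable Fp (\<lambda>x. (x k)^2)" and momq: "\<forall>k<d. integrable Fq (\<lambda>x. (x k)^2)"
  shows "(\<lambda>\<omega>. sqdist d (A \<omega>) (B \<omega>) / real d) \<in> borel_measurable M"
    and "measure M {\<omega> \<in> space M. \<bar>sqdist d (A \<omega>) (B \<omega>) / real d - c\<bar> > e}
       = measure (Fp \<Otimes>\<^sub>M Fq) {z \<in> space (Fp \<Otimes>\<^sub>M Fq). \<bar>(\<lambda>(x, y). (\<Sum>i<d. (x i - y i)^2) / real d) z - c\<bar> > e}"
    and "integral\<^sup>L (Fp \<Otimes>\<^sub>M Fq) (\<lambda>(x, y). (\<Sum>i<d. (x i - y i)^2) / real d)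
       = trace_cov d Fp / real d + trace_cov d Fq / real d
         + (\<Sum>i<d. (mean_vec Fp i - mean_vec Fq i)^2) / real d"
proof -
  interpret prob_space M by (rule P)
  define G where "G = (\<lambda>z::(nat\<Rightarrow>real)\<times>(nat\<Rightarrow>real). (\<Sum>i<d. (fst z i - snd z i)^2) / real d)"
  have gG: "(\<lambda>(x, y). (\<Sum>i<d. (x i - y i)^2) / real d) = G"
    unfolding G_def by (simp add: case_prod_unfold)
  have Gm: "G \<in> borel_measurable (vec_space d \<Otimes>\<^sub>M vec_space d)" unfolding G_def by (rule G_meas)
  have ABm: "(\<lambda>\<omega>. (A \<omega>, B \<omega>)) \<in> measurable M (vec_space d \<Otimes>\<^sub>M vec_space d)"
    using Am Bm by (rule measurable_Pair)
  have joint: "distr M (vec_space d \<Otimes>\<^sub>M vec_space d) (\<lambda>\<omega>. (A \<omega>, B \<omega>)) = Fp \<Otimes>\<^sub>M Fq"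
    using ind unfolding indep_var_distribution_eq Ad Bd by simp
  have sq: "sqdist d (A \<omega>) (B \<omega>) / real d = G (A \<omega>, B \<omega>)" for \<omega>
    unfolding G_def sqdist_def by simp
  show "(\<lambda>\<omega>. sqdist d (A \<omega>) (B \<omega>) / real d) \<in> borel_measurable M"
    unfolding sq using measurable_compose[OF ABm Gm] by simp
  have S: "{z \<in> space (vec_space d \<Otimes>\<^sub>M vec_space d). \<bar>G z - c\<bar> > e} \<in> sets (vec_space d \<Otimes>\<^sub>M vec_space d)"
    using Gm by measurable
  have "measure (Fp \<Otimes>\<^sub>M Fq) {z \<in> space (Fp \<Otimes>\<^sub>M Fq). \<bar>G z - c\<bar> > e}
     = measure (distr M (vec_space d \<Otimes>\<^sub>M vec_space d) (\<lambda>\<omega>. (A \<omega>, B \<omega>)))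
         {z \<in> space (vec_space d \<Otimes>\<^sub>M vec_space d). \<bar>G z - c\<bar> > e}"
    unfolding joint[symmetric] by simp
  also have "\<dots> = measure M ((\<lambda>\<omega>. (A \<omega>, B \<omega>)) -` {z \<in> space (vec_space d \<Otimes>\<^sub>M vec_space d). \<bar>G z - c\<bar> > e} \<inter> space M)"
    by (rule measure_distr[OF ABm S])
  also have "(\<lambda>\<omega>. (A \<omega>, B \<omega>)) -` {z \<in> space (vec_space d \<Otimes>\<^sub>M vec_space d). \<bar>G z - c\<bar> > e} \<inter> space M
     = {\<omega> \<in> space M. \<bar>sqdist d (A \<omega>) (B \<omega>) / real d - c\<bar> > e}"
    using measurable_space[OF ABm] unfolding sq by auto
  finally show "measure M {\<omega> \<in> space M. \<bar>sqdist d (A \<omega>) (B \<omega>) / real d - c\<bar> > e}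
       = measure (Fp \<Otimes>\<^sub>M Fq) {z \<in> space (Fp \<Otimes>\<^sub>M Fq). \<bar>(\<lambda>(x, y). (\<Sum>i<d. (x i - y i)^2) / real d) z - c\<bar> > e}"
    unfolding gG by simp
  have coordA: "(\<lambda>\<omega>. A \<omega> i) \<in> borel_measurable M" if "i < d" for i
    using measurable_compose[OF Am comp_meas[OF that]] by simp
  have coordB: "(\<lambda>\<omega>. B \<omega> i) \<in> borel_measurable M" if "i < d" for i
    using measurable_compose[OF Bm comp_meas[OF that]] by simp
  have intA: "(\<integral>\<omega>. f (A \<omega>) \<partial>M) = integral\<^sup>L Fp f" if "f \<in> borel_measurable (vec_space d)" for f :: "_ \<Rightarrow> real"
    unfolding Ad[symmetric] by (rule integral_distr[OF Am that, symmetric])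
  have intB: "(\<integral>\<omega>. f (B \<omega>) \<partial>M) = integral\<^sup>L Fq f" if "f \<in> borel_measurable (vec_space d)" for f :: "_ \<Rightarrow> real"
    unfolding Bd[symmetric] by (rule integral_distr[OF Bm that, symmetric])
  have iA2: "integrable M (\<lambda>\<omega>. (A \<omega> i)^2)" if "i < d" for i
  proof -
    have "integrable (distr M (vec_space d) A) (\<lambda>x. (x i)^2)" using momp that Ad by simp
    then show ?thesis using integrable_distr_eq[OF Am, of "\<lambda>x. (x i)^2"] comp_meas[OF that] by simp
  qed
  have iB2: "integrable M (\<lambda>\<omega>. (B \<omega> i)^2)" if "i < d" for i
  proof -
    have "integrable (distr M (vec_space d) B) (\<lambda>x. (x i)^2)" using momq that Bd by simp
    then show ?thesis using integrable_distr_eq[OF Bm, of "\<lambda>x. (x i)^2"] comp_meas[OF that] by simp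
  qed
  have indi: "indep_var borel (\<lambda>\<omega>. A \<omega> i) borel (\<lambda>\<omega>. B \<omega> i)" if "i < d" for i
    using indep_var_compose[OF ind comp_meas[OF that] comp_meas[OF that]] by (simp add: comp_def)
  have ci: "integrable M (\<lambda>\<omega>. (A \<omega> i - B \<omega> i)^2)
     \<and> (\<integral>\<omega>. (A \<omega> i - B \<omega> i)^2 \<partial>M) = (\<integral>x. (x i - mean_vec Fp i)^2 \<partial>Fp)
         + (\<integral>x. (x i - mean_vec Fq i)^2 \<partial>Fq) + (mean_vec Fp i - mean_vec Fq i)^2" if "i < d" for i
  proof -
    note cs = coord_sq[OF P indi[OF that] coordA[OF that] coordB[OF that] iA2[OF that] iB2[OF that]]
    have mA: "(\<integral>\<omega>. A \<omega> i \<partial>M) = mean_vec Fp i"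
      unfolding mean_vec_def using intA[OF comp_meas[OF that]] by simp
    have mB: "(\<integral>\<omega>. B \<omega> i \<partial>M) = mean_vec Fq i"
      unfolding mean_vec_def using intB[OF comp_meas[OF that]] by simp
    have fm: "(\<lambda>x. (x i - c')^2) \<in> borel_measurable (vec_space d)" for c'
      using comp_meas[OF that] by measurable
    show ?thesis using cs(1) cs(2) intA[OF fm] intB[OF fm] unfolding mA mB by simp
  qed
  have "integral\<^sup>L (Fp \<Otimes>\<^sub>M Fq) G = (\<integral>\<omega>. G (A \<omega>, B \<omega>) \<partial>M)"
    unfolding joint[symmetric] by (rule integral_distr[OF ABm Gm])
  also have "\<dots> = (\<integral>\<omega>. (\<Sum>i<d. (A \<omega> i - B \<omega> i)^2) / real d \<partial>M)"
    unfolding G_def by simp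
  also have "\<dots> = (\<Sum>i<d. (\<integral>\<omega>. (A \<omega> i - B \<omega> i)^2 \<partial>M)) / real d"
    using ci by (simp add: integral_sum)
  also have "\<dots> = (\<Sum>i<d. (\<integral>x. (x i - mean_vec Fp i)^2 \<partial>Fp)
         + (\<integral>x. (x i - mean_vec Fq i)^2 \<partial>Fq) + (mean_vec Fp i - mean_vec Fq i)^2) / real d"
    using ci by simp
  also have "\<dots> = trace_cov d Fp / real d + trace_cov d Fq / real d
         + (\<Sum>i<d. (mean_vec Fp i - mean_vec Fq i)^2) / real d"
    unfolding trace_cov_def by (simp add: sum.distrib add_divide_distrib)
  finally show "integral\<^sup>L (Fp \<Otimes>\<^sub>M Fq) (\<lambda>(x, y). (\<Sum>i<d. (x i - y i)^2) / real d)
       = trace_cov d Fp / real d + trace_cov d Fq / real d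
         + (\<Sum>i<d. (mean_vec Fp i - mean_vec Fq i)^2) / real d"
    unfolding gG .
qed


lemma pair_term:
  assumes P: "\<forall>d. prob_space (M d)" and pq: "p < J" "q < J"
    and A: "\<forall>d. A d \<in> measurable (M d) (vec_space d) \<and> distr (M d) (vec_space d) (A d) = F d p"
    and B: "\<forall>d. B d \<in> measurable (M d) (vec_space d) \<and> distr (M d) (vec_space d) (B d) = F d q"
    and ind: "\<forall>d. prob_space.indep_var (M d) (vec_space d) (A d) (vec_space d) (B d)"
    and Fmom: "\<forall>d. \<forall>j<J. \<forall>k<d. integrable (F d j) (\<lambda>x. (x k)^2)"
    and A1: "assumption_A1 J F" and A2: "assumption_A2 J F \<sigma>2 \<nu>2"
  shows "cipm M (\<lambda>d \<omega>. sqdist d (A d \<omega>) (B d \<omega>) / real d) (\<sigma>2 p + \<sigma>2 q + (if p = q then 0 else \<nu>2 p q))"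
proof -
  have pf: "(\<lambda>\<omega>. sqdist d (A d \<omega>) (B d \<omega>) / real d) \<in> borel_measurable (M d)"
    "measure (M d) {\<omega> \<in> space (M d). \<bar>sqdist d (A d \<omega>) (B d \<omega>) / real d - c\<bar> > e}
       = measure (F d p \<Otimes>\<^sub>M F d q) {z \<in> space (F d p \<Otimes>\<^sub>M F d q). \<bar>(\<lambda>(x, y). (\<Sum>i<d. (x i - y i)^2) / real d) z - c\<bar> > e}"
    "integral\<^sup>L (F d p \<Otimes>\<^sub>M F d q) (\<lambda>(x, y). (\<Sum>i<d. (x i - y i)^2) / real d)
       = trace_cov d (F d p) / real d + trace_cov d (F d q) / real d
         + (\<Sum>i<d. (mean_vec (F d p) i - mean_vec (F d q) i)^2) / real d" for d c e
    subgoal using pair_fixed(1)[where M="M d" and A="A d" and d=d and Fp="F d p" and B="B d" and Fq="F d q"] P A B ind Fmom pq by auto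
    subgoal using pair_fixed(2)[where M="M d" and A="A d" and d=d and Fp="F d p" and B="B d" and Fq="F d q" and c=c and e=e] P A B ind Fmom pq by auto
    subgoal using pair_fixed(3)[where M="M d" and A="A d" and d=d and Fp="F d p" and B="B d" and Fq="F d q"] P A B ind Fmom pq by auto
    done
  define cd where "cd d = integral\<^sup>L (F d p \<Otimes>\<^sub>M F d q) (\<lambda>(x, y). (\<Sum>i<d. (x i - y i)^2) / real d)" for d
  have a1: "conv_in_prob (\<lambda>d. F d p \<Otimes>\<^sub>M F d q) (\<lambda>d (x, y). (\<Sum>i<d. (x i - y i)^2) / real d) cd"
    using A1 pq unfolding assumption_A1_def cd_def by blast
  show ?thesis
  proof (rule cipm_det[OF P _ _ ])
    show "\<forall>d. (\<lambda>\<omega>. sqdist d (A d \<omega>) (B d \<omega>) / real d) \<in> borel_measurable (M d)" using pf(1) by auto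
    show "\<forall>e>0. (\<lambda>d. measure (M d) {\<omega> \<in> space (M d). \<bar>sqdist d (A d \<omega>) (B d \<omega>) / real d - cd d\<bar> > e}) \<longlonglongrightarrow> 0"
      using a1 unfolding conv_in_prob_def pf(2) by simp
    have t1: "(\<lambda>d. trace_cov d (F d p) / real d) \<longlonglongrightarrow> \<sigma>2 p"
      and t2: "(\<lambda>d. trace_cov d (F d q) / real d) \<longlonglongrightarrow> \<sigma>2 q"
      using A2 pq unfolding assumption_A2_def by auto
    have t3: "(\<lambda>d. (\<Sum>i<d. (mean_vec (F d p) i - mean_vec (F d q) i)^2) / real d) \<longlonglongrightarrow> (if p = q then 0 else \<nu>2 p q)"
    proof (cases "p = q")
      case True then show ?thesis by simp
    next
      case False then show ?thesis using A2 pq unfolding assumption_A2_def by auto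
    qed
    show "cd \<longlonglongrightarrow> \<sigma>2 p + \<sigma>2 q + (if p = q then 0 else \<nu>2 p q)"
      unfolding cd_def pf(3) by (intro tendsto_add t1 t2 t3)
  qed
qed


lemma coord_identity:
  fixes x :: real and y :: "nat \<Rightarrow> real"
  assumes m: "m > 0"
  shows "(x - (\<Sum>a<m. y a) / real m)^2
     = (1 / real m) * (\<Sum>a<m. (x - y a)^2) + (- (1 / (2 * (real m)^2))) * (\<Sum>a<m. \<Sum>b<m. (y a - y b)^2)"
proof -
  define S1 where "S1 = (\<Sum>a<m. y a)"
  define S2 where "S2 = (\<Sum>a<m. (y a)^2)"
  have e1: "(\<Sum>a<m. (x - y a)^2) = real m * x^2 - 2 * x * S1 + S2"
    unfolding S1_def S2_def
    by (simp add: power2_diff sum.distrib sum_subtractf sum_distrib_left mult.assoc)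
  have e2: "(\<Sum>b<m. (y a - y b)^2) = real m * (y a)^2 - 2 * y a * S1 + S2" for a
    unfolding S1_def S2_def
    by (simp add: power2_diff sum.distrib sum_subtractf sum_distrib_left mult.assoc)
  have e3: "(\<Sum>a<m. \<Sum>b<m. (y a - y b)^2) = 2 * real m * S2 - 2 * S1^2"
    unfolding e2 unfolding S1_def S2_def
    apply (simp add: sum.distrib sum_subtractf sum_distrib_left sum_distrib_right power2_eq_square mult.assoc)
    apply (rule sum.swap)
    done
  show ?thesis unfolding e1 e3 S1_def[symmetric] using m
    by (simp add: field_simps power2_eq_square)
qed

lemma sqdist_mean_identity:
  assumes m: "m > 0"
  shows "sqdist d x (sample_mean m Y \<omega>) / real d
     = (1 / real m) * (\<Sum>a<m. sqdist d x (Y a \<omega>) / real d)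
       + (- (1 / (2 * (real m)^2))) * (\<Sum>a<m. \<Sum>b<m. sqdist d (Y a \<omega>) (Y b \<omega>) / real d)"
proof -
  have "sqdist d x (sample_mean m Y \<omega>) = (\<Sum>c<d. (1 / real m) * (\<Sum>a<m. (x c - Y a \<omega> c)^2)
      + (- (1 / (2 * (real m)^2))) * (\<Sum>a<m. \<Sum>b<m. (Y a \<omega> c - Y b \<omega> c)^2))"
    unfolding sqdist_def sample_mean_def using coord_identity[OF m] by simp
  also have "\<dots> = (1 / real m) * (\<Sum>a<m. sqdist d x (Y a \<omega>))
       + (- (1 / (2 * (real m)^2))) * (\<Sum>a<m. \<Sum>b<m. sqdist d (Y a \<omega>) (Y b \<omega>))"
    unfolding sqdist_def sum.distrib sum_distrib_left[symmetric]
    by (simp add: sum.swap[of _ "{..<d}"])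
  finally show ?thesis
    by (simp add: sum_divide_distrib[symmetric] add_divide_distrib diff_divide_distrib)
qed


lemma indep_pair_from_family:
  assumes P: "prob_space M" and ind: "prob_space.indep_vars M (\<lambda>_. N) Y I"
    and ab: "a \<in> I" "b \<in> I" "a \<noteq> b"
  shows "prob_space.indep_var M N (Y a) N (Y b)"
proof -
  interpret prob_space M by (rule P)
  have "indep_var (PiM {a} (\<lambda>_. N)) (\<lambda>\<omega>. restrict (\<lambda>i. Y i \<omega>) {a}) (PiM {b} (\<lambda>_. N)) (\<lambda>\<omega>. restrict (\<lambda>i. Y i \<omega>) {b})"
    using ab by (intro indep_var_restrict[OF ind]) auto
  then have "indep_var N ((\<lambda>f. f a) \<circ> (\<lambda>\<omega>. restrict (\<lambda>i. Y i \<omega>) {a})) N ((\<lambda>f. f b) \<circ> (\<lambda>\<omega>. restrict (\<lambda>i. Y i \<omega>) {b}))"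
    by (rule indep_var_compose) (auto intro: measurable_component_singleton)
  then show ?thesis by (simp add: comp_def)
qed

lemma comp_conv:
  assumes P: "\<forall>d. prob_space (M d)" and m: "m > 0"
    and hx: "\<forall>a<m. cipm M (\<lambda>d \<omega>. sqdist d (x d \<omega>) (Y d a \<omega>) / real d) (L a)"
    and hy: "\<forall>a<m. \<forall>b<m. cipm M (\<lambda>d \<omega>. sqdist d (Y d a \<omega>) (Y d b \<omega>) / real d) (Q a b)"
  shows "cipm M (\<lambda>d \<omega>. sqdist d (x d \<omega>) (sample_mean m (Y d) \<omega>) / real d)
     ((1 / real m) * (\<Sum>a<m. L a) + (- (1 / (2 * (real m)^2))) * (\<Sum>a<m. \<Sum>b<m. Q a b))"
proof -
  have s1: "cipm M (\<lambda>d \<omega>. \<Sum>a<m. sqdist d (x d \<omega>) (Y d a \<omega>) / real d) (\<Sum>a<m. L a)"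
    by (rule cipm_sum[OF P]) (use hx in auto)
  have s2: "cipm M (\<lambda>d \<omega>. \<Sum>a<m. \<Sum>b<m. sqdist d (Y d a \<omega>) (Y d b \<omega>) / real d) (\<Sum>a<m. \<Sum>b<m. Q a b)"
    by (rule cipm_sum[OF P]) (use hy in \<open>auto intro!: cipm_sum[OF P]\<close>)
  show ?thesis
    unfolding sqdist_mean_identity[OF m]
    by (rule cipm_add[OF P cipm_scale[OF P s1] cipm_scale[OF P s2]])
qed

lemma sum_if_skip:
  assumes "i < m"
  shows "(\<Sum>a<m. if a = i then 0 else c) = (real m - 1) * (c :: real)"
proof -
  have "(\<Sum>a<m. if a = i then 0 else c) = (if i = i then 0 else c) + (\<Sum>a\<in>{..<m} - {i}. if a = i then 0 else c)"
    by (rule sum.remove) (use assms in auto)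
  also have "\<dots> = (\<Sum>a\<in>{..<m} - {i}. c)"
    using sum.cong[of "{..<m} - {i}" "{..<m} - {i}" "\<lambda>a. if a = i then 0 else c" "\<lambda>a. c"] by auto
  also have "\<dots> = real (m - 1) * c" using assms by simp
  also have "\<dots> = (real m - 1) * c" using assms by (simp add: of_nat_diff)
  finally show ?thesis .
qed

lemma sum_offdiag:
  "(\<Sum>a<m. \<Sum>b<m. if a = b then 0 else c) = real m * (real m - 1) * (c :: real)"
proof -
  have "(\<Sum>a<m. \<Sum>b<m. if a = b then 0 else c) = (\<Sum>a<m. (real m - 1) * c)"
    by (intro sum.cong refl) (simp add: sum_if_skip[symmetric] eq_commute)
  then show ?thesis by simp
qed

lemma zero_term: "cipm M (\<lambda>d \<omega>. sqdist d (f d \<omega>) (f d \<omega>) / real d) 0"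
  using cipm_const[of M 0] by (simp add: sqdist_def)

theorem theorem3:
  fixes J :: nat and n :: "nat \<Rightarrow> nat"
    and M :: "nat \<Rightarrow> 'a measure"
    and F :: "nat \<Rightarrow> nat \<Rightarrow> (nat \<Rightarrow> real) measure"
    and X :: "nat \<Rightarrow> nat \<Rightarrow> nat \<Rightarrow> 'a \<Rightarrow> (nat \<Rightarrow> real)"
    and \<sigma>2 :: "nat \<Rightarrow> real" and \<nu>2 :: "nat \<Rightarrow> nat \<Rightarrow> real"
  assumes J: "J \<ge> 2"
    and n: "\<forall>j<J. n j \<ge> 2"
    and M: "\<forall>d. prob_space (M d)"
    and Fmom: "\<forall>d. \<forall>j<J. \<forall>k<d. integrable (F d j) (\<lambda>x. (x k)^2)"
    and Xdist: "\<forall>d. \<forall>j<J. \<forall>i<n j. X d j i \<in> measurable (M d) (vec_space d)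
                   \<and> distr (M d) (vec_space d) (X d j i) = F d j"
    and Xindep: "\<forall>d. prob_space.indep_vars (M d) (\<lambda>_. vec_space d) (\<lambda>(j, i). X d j i)
                   {(j, i). j < J \<and> i < n j}"
    and A1: "assumption_A1 J F"
    and A2: "assumption_A2 J F \<sigma>2 \<nu>2"
  shows "(\<forall>j<J. \<forall>i<n j.
            vec_conv_in_prob M J (\<lambda>d \<omega> k. Delta_hat d n (X d) \<omega> (X d j i \<omega>) k / real d)
              (Theta n \<sigma>2 \<nu>2 j))
       \<and> (\<forall>(Z :: nat \<Rightarrow> 'a \<Rightarrow> (nat \<Rightarrow> real)) l.
            l < J
            \<longrightarrow> (\<forall>d. Z d \<in> measurable (M d) (vec_space d)
                     \<and> distr (M d) (vec_space d) (Z d) = F d l)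
            \<longrightarrow> (\<forall>d. prob_space.indep_vars (M d) (\<lambda>_. vec_space d)
                     (\<lambda>idx. case idx of None \<Rightarrow> Z d | Some (j, i) \<Rightarrow> X d j i)
                     (insert None (Some ` {(j, i). j < J \<and> i < n j})))
            \<longrightarrow> vec_conv_in_prob M J (\<lambda>d \<omega> k. Delta_hat d n (X d) \<omega> (Z d \<omega>) k / real d)
                  (Theta_star n \<sigma>2 \<nu>2 l))"
proof -
  have P: "\<forall>d. prob_space (M d)" using M .
  have Xrv: "\<forall>d. X d j i \<in> measurable (M d) (vec_space d) \<and> distr (M d) (vec_space d) (X d j i) = F d j"
    if "j < J" "i < n j" for j i using Xdist that by auto
  have XX: "\<forall>d. prob_space.indep_var (M d) (vec_space d) (X d j i) (vec_space d) (X d k a)"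
    if "j < J" "i < n j" "k < J" "a < n k" "(j, i) \<noteq> (k, a)" for j i k a
  proof
    fix d
    show "prob_space.indep_var (M d) (vec_space d) (X d j i) (vec_space d) (X d k a)"
      using indep_pair_from_family[OF M[rule_format, of d] Xindep[rule_format, of d], of "(j, i)" "(k, a)"] that
      by simp
  qed
  have PTX: "cipm M (\<lambda>d \<omega>. sqdist d (X d j i \<omega>) (X d k a \<omega>) / real d)
      (\<sigma>2 j + \<sigma>2 k + (if j = k then 0 else \<nu>2 j k))"
    if "j < J" "i < n j" "k < J" "a < n k" "(j, i) \<noteq> (k, a)" for j i k a
    by (rule pair_term[OF P that(1) that(3) Xrv[OF that(1,2)] Xrv[OF that(3,4)] XX[OF that] Fmom A1 A2])
  have hyk: "\<forall>a<n k. \<forall>b<n k. cipm M (\<lambda>d \<omega>. sqdist d (X d k a \<omega>) (X d k b \<omega>) / real d)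
      (if a = b then 0 else \<sigma>2 k + \<sigma>2 k)" if "k < J" for k
  proof (intro allI impI)
    fix a b assume ab: "a < n k" "b < n k"
    show "cipm M (\<lambda>d \<omega>. sqdist d (X d k a \<omega>) (X d k b \<omega>) / real d) (if a = b then 0 else \<sigma>2 k + \<sigma>2 k)"
    proof (cases "a = b")
      case True then show ?thesis using zero_term[of M "\<lambda>d. X d k a"] by simp
    next
      case False then show ?thesis using PTX[OF that ab(1) that ab(2)] by simp
    qed
  qed
  have m0: "n k > 0" if "k < J" for k using n that by fastforce
  have DH: "Delta_hat d n (X d) \<omega> x k = sqdist d x (sample_mean (n k) (X d k) \<omega>)" for d \<omega> x k
    unfolding Delta_hat_def by simp
  show ?thesis
  proof (intro conjI allI impI)
    fix j i assume j: "j < J" and i: "i < n j"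
    show "vec_conv_in_prob M J (\<lambda>d \<omega> k. Delta_hat d n (X d) \<omega> (X d j i \<omega>) k / real d) (Theta n \<sigma>2 \<nu>2 j)"
    proof (rule cipm_vec[OF P], intro allI impI)
      fix k assume k: "k < J"
      define m where "m = n k"
      have m2: "real m \<ge> 2" using n k unfolding m_def by auto
      show "cipm M (\<lambda>d \<omega>. Delta_hat d n (X d) \<omega> (X d j i \<omega>) k / real d) (Theta n \<sigma>2 \<nu>2 j k)"
      proof (cases "k = j")
        case True
        have hx: "\<forall>a<n k. cipm M (\<lambda>d \<omega>. sqdist d (X d j i \<omega>) (X d k a \<omega>) / real d)
            (if a = i then 0 else \<sigma>2 j + \<sigma>2 j)"
        proof (intro allI impI)
          fix a assume a: "a < n k"
          show "cipm M (\<lambda>d \<omega>. sqdist d (X d j i \<omega>) (X d k a \<omega>) / real d) (if a = i then 0 else \<sigma>2 j + \<sigma>2 j)"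
          proof (cases "a = i")
            case True then show ?thesis using zero_term[of M "\<lambda>d. X d j i"] \<open>k = j\<close> by simp
          next
            case False then show ?thesis using PTX[OF j i k a] \<open>k = j\<close> by simp
          qed
        qed
        note cc = comp_conv[OF P m0[OF k] hx hyk[OF k]]
        have val: "(1 / real m) * (\<Sum>a<m. if a = i then 0 else \<sigma>2 j + \<sigma>2 j)
            + (- (1 / (2 * (real m)^2))) * (\<Sum>a<m. \<Sum>b<m. if a = b then 0 else \<sigma>2 k + \<sigma>2 k)
            = Theta n \<sigma>2 \<nu>2 j k"
        proof -
          have nj: "n j = m" using True m_def by simp
          have sk: "(\<Sum>a<m. if a = i then 0 else \<sigma>2 j + \<sigma>2 j) = (real m - 1) * (\<sigma>2 j + \<sigma>2 j)"
            using sum_if_skip[of i m] i nj by simp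
          show ?thesis using m2 unfolding Theta_def sum_offdiag sk using True nj
            by (simp add: field_simps power2_eq_square)
        qed
        show ?thesis using cc unfolding DH val[unfolded m_def] by simp
      next
        case False
        have hx: "\<forall>a<n k. cipm M (\<lambda>d \<omega>. sqdist d (X d j i \<omega>) (X d k a \<omega>) / real d)
            (\<sigma>2 j + \<sigma>2 k + \<nu>2 j k)"
          using PTX[OF j i k] False by auto
        note cc = comp_conv[OF P m0[OF k] hx hyk[OF k]]
        have val: "(1 / real m) * (\<Sum>a<m. \<sigma>2 j + \<sigma>2 k + \<nu>2 j k)
            + (- (1 / (2 * (real m)^2))) * (\<Sum>a<m. \<Sum>b<m. if a = b then 0 else \<sigma>2 k + \<sigma>2 k)
            = Theta n \<sigma>2 \<nu>2 j k"
          using m2 False unfolding Theta_def sum_offdiag m_def[symmetric]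
          by (simp add: field_simps power2_eq_square)
        show ?thesis using cc unfolding DH val[unfolded m_def] by simp
      qed
    qed
  next
    fix Z :: "nat \<Rightarrow> 'a \<Rightarrow> (nat \<Rightarrow> real)" and l
    assume l: "l < J"
      and Zrv: "\<forall>d. Z d \<in> measurable (M d) (vec_space d) \<and> distr (M d) (vec_space d) (Z d) = F d l"
      and Zind: "\<forall>d. prob_space.indep_vars (M d) (\<lambda>_. vec_space d)
                     (\<lambda>idx. case idx of None \<Rightarrow> Z d | Some (j, i) \<Rightarrow> X d j i)
                     (insert None (Some ` {(j, i). j < J \<and> i < n j}))"
    show "vec_conv_in_prob M J (\<lambda>d \<omega> k. Delta_hat d n (X d) \<omega> (Z d \<omega>) k / real d) (Theta_star n \<sigma>2 \<nu>2 l)"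
    proof (rule cipm_vec[OF P], intro allI impI)
      fix k assume k: "k < J"
      define m where "m = n k"
      have m2: "real m \<ge> 2" using n k unfolding m_def by auto
      have hx: "\<forall>a<n k. cipm M (\<lambda>d \<omega>. sqdist d (Z d \<omega>) (X d k a \<omega>) / real d)
            (\<sigma>2 l + \<sigma>2 k + (if l = k then 0 else \<nu>2 l k))"
      proof (intro allI impI)
        fix a assume a: "a < n k"
        have ZX: "\<forall>d. prob_space.indep_var (M d) (vec_space d) (Z d) (vec_space d) (X d k a)"
        proof
          fix d
          show "prob_space.indep_var (M d) (vec_space d) (Z d) (vec_space d) (X d k a)"
            using indep_pair_from_family[OF M[rule_format, of d] Zind[rule_format, of d], of None "Some (k, a)"] k a
            by simp
        qed
        show "cipm M (\<lambda>d \<omega>. sqdist d (Z d \<omega>) (X d k a \<omega>) / real d)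
            (\<sigma>2 l + \<sigma>2 k + (if l = k then 0 else \<nu>2 l k))"
          by (rule pair_term[OF P l k Zrv Xrv[OF k a] ZX Fmom A1 A2])
      qed
      note cc = comp_conv[OF P m0[OF k] hx hyk[OF k]]
      have val: "(1 / real m) * (\<Sum>a<m. \<sigma>2 l + \<sigma>2 k + (if l = k then 0 else \<nu>2 l k))
          + (- (1 / (2 * (real m)^2))) * (\<Sum>a<m. \<Sum>b<m. if a = b then 0 else \<sigma>2 k + \<sigma>2 k)
          = Theta_star n \<sigma>2 \<nu>2 l k"
      proof (cases "k = l")
        case True
        then have nl: "n l = m" using m_def by simp
        show ?thesis using m2 unfolding Theta_star_def sum_offdiag using True nl
          by (simp add: field_simps power2_eq_square)
      next
        case False
        then show ?thesis using m2 unfolding Theta_star_def sum_offdiag m_def[symmetric]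
          by (simp add: field_simps power2_eq_square)
      qed
      show "cipm M (\<lambda>d \<omega>. Delta_hat d n (X d) \<omega> (Z d \<omega>) k / real d) (Theta_star n \<sigma>2 \<nu>2 l k)"
        using cc unfolding DH val[unfolded m_def] by simp
    qed
  qed
qed

end
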